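(* Let $q>0$, $q\neq1$. For every integer $N\ge0$, $$H_N(x;q)=[2]_q^N\,e^{-\frac{1}{[2]_q^2}D_x^2}\,x^N,$$ where $e^{aD_x^2}:=\sum_{n\ge0}\frac{a^n}{n!}D_x^{2n}$ (a finite sum on polynomials).
   Context: For $n\ge 0$ let $[n]_q=\frac{q^n-1}{q-1}$, $[0]_q!=1$, $[n]_q!=[1]_q\cdots[n]_q$, and $e_q(z)=\sum_{n\ge0}z^n/[n]_q!$. The $q$-derivative acts on polynomials by $D_x x^n=[n]_qx^{n-1}$ (equivalently $D_xf(x)=\frac{f(qx)-f(x)}{(q-1)x}$). The $q$-Hermite polynomials $H_N(x;q)$ are defined by the identity of formal power series in $t$: $e^{-t^2}e_q([2]_q t x)=\sum_{N\ge0}H_N(x;q)\,t^N/[N]_q!$. *)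

theory Defs
  imports "HOL-Computational_Algebra.Polynomial" "HOL-Computational_Algebra.Formal_Power_Series"
begin

definition q_int :: "real \<Rightarrow> nat \<Rightarrow> real" where
  "q_int q n = (q ^ n - 1) / (q - 1)"

definition q_fact :: "real \<Rightarrow> nat \<Rightarrow> real" where
  "q_fact q n = (\<Prod>k = 1..n. q_int q k)"

definition q_exp_fps :: "real \<Rightarrow> real \<Rightarrow> real fps" where
  "q_exp_fps q c = Abs_fps (\<lambda>n. c ^ n / q_fact q n)"

definition exp_neg_sq_fps :: "real fps" where
  "exp_neg_sq_fps = fps_compose (fps_exp 1) (- (fps_X ^ 2))"

text \<open>q-Hermite polynomials defined by the generating function
  exp(-t^2) e_q([2]_q t x) = sum_N H_N(x;q) t^N / [N]_q!\<close>
definition q_hermite :: "nat \<Rightarrow> real \<Rightarrow> real \<Rightarrow> real" where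
  "q_hermite N x q = q_fact q N * fps_nth (exp_neg_sq_fps * q_exp_fps q (q_int q 2 * x)) N"

definition q_deriv :: "real \<Rightarrow> real poly \<Rightarrow> real poly" where
  "q_deriv q p = (\<Sum>n\<le>degree p. smult (coeff p n * q_int q n) (monom 1 (n - 1)))"

end

theory Submission
  imports Defs
begin

lemma q_deriv_monom: "q_deriv q (monom c m) = monom (c * q_int q m) (m - 1)"
proof (cases "c = 0")
  case True then show ?thesis by (simp add: q_deriv_def)
next
  case False
  have "q_deriv q (monom c m) = (\<Sum>n\<le>m. smult (coeff (monom c m) n * q_int q n) (monom 1 (n - 1)))"
    using False by (simp add: q_deriv_def degree_monom_eq)
  also have "\<dots> = smult (c * q_int q m) (monom 1 (m - 1))"
    by (subst sum.remove[of _ m]) (auto simp: coeff_monom intro!: sum.neutral)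
  finally show ?thesis by (simp add: smult_monom)
qed

lemma q_deriv_iter: "(q_deriv q ^^ j) (monom c m) = monom (c * (\<Prod>i<j. q_int q (m - i))) (m - j)"
  by (induction j) (simp_all add: q_deriv_monom mult_ac)

lemma q_fact_Suc: "q_fact q (Suc m) = q_fact q m * q_int q (Suc m)"
  by (simp add: q_fact_def)

lemma q_fact_split: "q_fact q (k + j) = q_fact q k * (\<Prod>i<j. q_int q (k + j - i))"
proof (induction j)
  case 0 then show ?case by simp
next
  case (Suc j)
  have "(\<Prod>i<Suc j. q_int q (k + Suc j - i)) = q_int q (k + Suc j) * (\<Prod>i<j. q_int q (k + j - i))"
    by (subst prod.lessThan_Suc_shift) simp
  then show ?case using Suc by (simp add: q_fact_Suc)
qed

lemma q_int_pos: assumes "q > 0" "q \<noteq> 1" "k \<ge> 1" shows "q_int q k > 0"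
proof -
  have "q_int q k = (\<Sum>i<k. q ^ i)"
    using assms by (simp add: sum_gp_strict q_int_def) (simp add: field_simps)
  also have "\<dots> > 0" using assms
    by (intro sum_pos) (auto simp: lessThan_empty_iff)
  finally show ?thesis .
qed

lemma q_fact_pos: assumes "q > 0" "q \<noteq> 1" shows "q_fact q k > 0"
  unfolding q_fact_def using q_int_pos[OF assms] by (intro prod_pos) auto

lemma exp_neg_sq_nth:
  "fps_nth exp_neg_sq_fps i = (if even i then (-1) ^ (i div 2) / fact (i div 2) else 0)"
proof -
  have p: "fps_nth ((- (fps_X ^ 2)) ^ j :: real fps) i = (if i = 2 * j then (-1) ^ j else 0)" for j
  proof -
    have "(- (fps_X ^ 2)) ^ j = (fps_const ((-1) ^ j) * fps_X ^ (2 * j) :: real fps)"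
    proof -
      have "(- (fps_X ^ 2)) ^ j = ((-1) ^ j * (fps_X ^ 2) ^ j :: real fps)"
        by (rule power_minus)
      also have "(-1) ^ j = (fps_const ((-1) ^ j) :: real fps)"
        by (simp add: fps_const_power[symmetric] fps_const_neg[symmetric])
      finally show ?thesis by (simp add: power_mult)
    qed
    then show ?thesis by (simp add: fps_X_power_iff)
  qed
  have d: "(\<Sum>j=0..i. if i = 2 * j then g j else 0) = (if even i then g (i div 2) else 0)"
    for g :: "nat \<Rightarrow> real"
  proof (cases "even i")
    case True
    then obtain k where k: "i = 2 * k" by (elim evenE)
    have "(\<Sum>j=0..i. if i = 2 * j then g j else 0) = (\<Sum>j=0..i. if j = k then g j else 0)"
      by (intro sum.cong) (auto simp: k)
    also have "\<dots> = g k" by (simp add: sum.delta' k)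
    finally show ?thesis using k by simp
  next
    case False
    then show ?thesis by (intro trans[OF sum.neutral]) auto
  qed
  show ?thesis
    unfolding exp_neg_sq_fps_def fps_compose_nth p
    by (simp add: if_distrib d cong: if_cong)
qed

lemma even_reindex:
  fixes h :: "nat \<Rightarrow> real"
  shows "(\<Sum>i=0..N. if even i then h (i div 2) else 0) = (\<Sum>n\<le>N. if 2 * n \<le> N then h n else 0)"
proof -
  have "(\<Sum>n\<le>N. if 2 * n \<le> N then h n else 0) = (\<Sum>n\<in>{n. 2 * n \<le> N}. h n)"
    by (subst sum.inter_filter[symmetric]) (auto intro!: sum.cong)
  also have "\<dots> = (\<Sum>i\<in>(\<lambda>n. 2 * n) ` {n. 2 * n \<le> N}. h (i div 2))"
    by (subst sum.reindex) (auto simp: inj_on_def)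
  also have "\<dots> = (\<Sum>i=0..N. if even i then h (i div 2) else 0)"
    by (rule sum.mono_neutral_cong_left) (auto elim!: evenE)
  finally show ?thesis by simp
qed

theorem proposition2:
  fixes q x :: real and N :: nat
  assumes "q > 0" and "q \<noteq> 1"
  shows "q_hermite N x q =
    q_int q 2 ^ N * poly (\<Sum>n\<le>N. smult ((- 1 / q_int q 2 ^ 2) ^ n / fact n)
                                    ((q_deriv q ^^ (2 * n)) (monom 1 N))) x"
proof -
  define c where "c = q_int q 2"
  have c0: "c \<noteq> 0" using q_int_pos[OF assms, of 2] by (simp add: c_def)
  define h where "h n = q_fact q N * ((-1) ^ n / fact n * ((c * x) ^ (N - 2 * n) / q_fact q (N - 2 * n)))" for n
  have L: "q_hermite N x q = (\<Sum>n\<le>N. if 2 * n \<le> N then h n else 0)"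
    unfolding q_hermite_def fps_mult_nth exp_neg_sq_nth q_exp_fps_def
    by (simp add: sum_distrib_left h_def c_def flip: even_reindex) (auto intro!: sum.cong simp: h_def c_def elim!: evenE)
  have R: "q_int q 2 ^ N * poly (\<Sum>n\<le>N. smult ((- 1 / q_int q 2 ^ 2) ^ n / fact n)
                                    ((q_deriv q ^^ (2 * n)) (monom 1 N))) x
     = (\<Sum>n\<le>N. c ^ N * ((- 1 / c ^ 2) ^ n / fact n * ((\<Prod>i<2*n. q_int q (N - i)) * x ^ (N - 2 * n))))"
    by (simp add: poly_sum q_deriv_iter poly_monom sum_distrib_left c_def)
  have T: "c ^ N * ((- 1 / c ^ 2) ^ n / fact n * ((\<Prod>i<2*n. q_int q (N - i)) * x ^ (N - 2 * n)))
        = (if 2 * n \<le> N then h n else 0)" if "n \<le> N" for n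
  proof (cases "2 * n \<le> N")
    case True
    define k where "k = N - 2 * n"
    have N: "N = k + 2 * n" using True by (simp add: k_def)
    have qf: "q_fact q N = q_fact q k * (\<Prod>i<2*n. q_int q (N - i))"
      using q_fact_split[of q k "2*n"] by (simp add: N)
    have pk: "q_fact q k \<noteq> 0" using q_fact_pos[OF assms] by (metis less_irrefl)
    have cN: "c ^ N = c ^ k * (c ^ 2) ^ n" by (simp add: N power_add power_mult)
    have cc: "(c ^ 2) ^ n * (- (1 / c ^ 2)) ^ n = (-1) ^ n"
    proof -
      have "(c ^ 2) ^ n * (- (1 / c ^ 2)) ^ n = (c ^ 2 * (- (1 / c ^ 2))) ^ n"
        by (simp only: power_mult_distrib)
      also have "\<dots> = (-1) ^ n" using c0 by simp
      finally show ?thesis .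
    qed
    then show ?thesis using True c0 pk cc cN
      by (simp add: h_def qf flip: k_def) (simp add: field_simps power_mult_distrib power_divide)
  next
    case False
    then have "(\<Prod>i<2*n. q_int q (N - i)) = 0"
      by (intro prod_zero) (auto simp: q_int_def intro!: bexI[of _ N])
    then show ?thesis using False by simp
  qed
  show ?thesis unfolding L R by (intro sum.cong refl, rule T[symmetric]) simp
qed

end
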